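(* Let $\boldsymbol\theta^*\in\mathbb{R}^d$ and $\mathbf Y\sim\tfrac12N(-\boldsymbol\theta^*,I_d)+\tfrac12N(\boldsymbol\theta^*,I_d)$. Let $\mathbf U\in\mathbb{R}^{d\times k}$ with $\mathbf U^\top\mathbf U=I_k$, and let $\mathbf d\in\mathbb{R}^d$ be such that $\boldsymbol\theta^*$ and $\mathbf d$ lie in the range of $\mathbf U$. Then for any $\mathbf V\in\mathbb{R}^{d\times l}$ with $\mathbf V^\top\mathbf U=\mathbf 0$ and any $\mathbf c\in\mathbb{R}^d$, $$\mathbf V^\top\,\mathbb{E}\big[w_d(\mathbf Y-\mathbf c,\mathbf d)\mathbf Y\big]=\mathbf 0.$$
   Context: $w_d(\mathbf y,\boldsymbol\theta)=\frac{e^{\langle\mathbf y,\boldsymbol\theta\rangle}}{e^{\langle\mathbf y,\boldsymbol\theta\rangle}+e^{-\langle\mathbf y,\boldsymbol\theta\rangle}}$ for $\mathbf y,\boldsymbol\theta\in\mathbb{R}^d$. *)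

theory Defs
  imports "HOL-Probability.Probability"
begin

definition w_d :: "real ^ 'n \<Rightarrow> real ^ 'n \<Rightarrow> real" where
  "w_d y \<theta> = exp (y \<bullet> \<theta>) / (exp (y \<bullet> \<theta>) + exp (- (y \<bullet> \<theta>)))"

definition mvn_id_density :: "real ^ 'n \<Rightarrow> real ^ 'n \<Rightarrow> real" where
  "mvn_id_density \<mu> y = (\<Prod>i\<in>UNIV. normal_density (\<mu> $ i) 1 (y $ i))"

definition sym_mixture_density :: "real ^ 'n \<Rightarrow> real ^ 'n \<Rightarrow> real" where
  "sym_mixture_density \<theta> y = 1/2 * mvn_id_density (- \<theta>) y + 1/2 * mvn_id_density \<theta> y"

end

theory Submission
  imports Defs
begin


typedef 'a wo = "UNIV :: 'a set" by auto

instance wo :: (finite) finite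
proof
  have "(UNIV :: 'a wo set) = Abs_wo ` UNIV"
    by (metis Rep_wo_inverse surj_def)
  moreover have "finite (range (Abs_wo :: 'a \<Rightarrow> 'a wo))" by simp
  ultimately show "finite (UNIV :: 'a wo set)" by simp
qed

definition enc :: "'a::finite \<Rightarrow> nat" where "enc = (SOME f. inj f)"

lemma inj_enc: "inj (enc :: 'a::finite \<Rightarrow> nat)"
proof -
  obtain f :: "'a \<Rightarrow> nat" and n where "inj_on f UNIV"
    using finite_imp_inj_to_nat_seg[of "UNIV :: 'a set"] by auto
  then show ?thesis unfolding enc_def by (metis someI_ex)
qed

instantiation wo :: (finite) linorder
begin
definition "less_eq_wo (x::'a wo) (y::'a wo) \<longleftrightarrow> enc (Rep_wo x) \<le> enc (Rep_wo y)"
definition "less_wo (x::'a wo) (y::'a wo) \<longleftrightarrow> enc (Rep_wo x) < enc (Rep_wo y)"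
instance
proof
  fix x y :: "'a wo"
  show "x \<le> y \<Longrightarrow> y \<le> x \<Longrightarrow> x = y"
    unfolding less_eq_wo_def using inj_enc[where 'a='a]
    by (metis Rep_wo_inject injD le_antisym)
qed (auto simp: less_eq_wo_def less_wo_def)
end

instance wo :: (finite) wellorder
proof
  fix P :: "'a wo \<Rightarrow> bool" and a :: "'a wo"
  assume step: "\<And>x. (\<And>y. y < x \<Longrightarrow> P y) \<Longrightarrow> P x"
  show "P a"
  proof (induct "enc (Rep_wo a)" arbitrary: a rule: less_induct)
    case less
    then show ?case using step by (auto simp: less_wo_def)
  qed
qed

lemma orth_wo:
  fixes f :: "real^'n::{finite,wellorder} \<Rightarrow> real^'n::_"
  assumes f: "orthogonal_transformation f"
  shows "distr lborel borel f = lborel"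
proof -
  have lin: "linear f" using f by (rule orthogonal_transformation_linear)
  have mf: "f \<in> borel_measurable borel"
    using lin by (intro borel_measurable_continuous_onI linear_continuous_on linear_conv_bounded_linear[THEN iffD1])
  define g where "g = inv f"
  have g: "orthogonal_transformation g" using f g_def orthogonal_transformation_inv by blast
  have bf: "bij f" using f orthogonal_transformation_bij by blast
  have pre: "f -` A = g ` A" for A
    using bf unfolding g_def by (simp add: bij_vimage_eq_inv_image)
  show ?thesis
  proof (rule lborel_eqI[symmetric])
    fix l u :: "(real, 'n) vec"
    assume le: "\<And>b. b \<in> Basis \<Longrightarrow> l \<bullet> b \<le> u \<bullet> b"
    have bl: "box l u \<in> lmeasurable" by simp
    have gl: "g ` box l u \<in> lmeasurable" using measurable_orthogonal_image[OF g bl] .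
    have gs: "g ` box l u \<in> sets borel"
    proof -
      have "open (f -` box l u)"
        using lin by (intro continuous_open_vimage open_box linear_continuous_at linear_conv_bounded_linear[THEN iffD1]) auto
      then show ?thesis unfolding pre by simp
    qed
    have "emeasure (distr lborel borel f) (box l u) = emeasure lborel (g ` box l u)"
    proof -
      have m2: "f \<in> lborel \<rightarrow>\<^sub>M borel" using mf by simp
      show ?thesis using emeasure_distr[OF m2, of "box l u"] pre[of "box l u"] by simp
    qed
    also have "\<dots> = emeasure lebesgue (g ` box l u)"
      using gs by (simp add: emeasure_completion)
    also have "\<dots> = measure lebesgue (g ` box l u)"
      using gl by (simp add: emeasure_eq_measure2)
    also have "\<dots> = measure lebesgue (box l u)"
      using measure_orthogonal_image[OF g bl] by simp
    also have "\<dots> = emeasure lebesgue (box l u)"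
      using bl by (simp add: emeasure_eq_measure2)
    also have "\<dots> = emeasure lborel (box l u)"
      by (simp add: emeasure_completion)
    also have "\<dots> = (\<Prod>b\<in>Basis. (u - l) \<bullet> b)"
      using le by (simp add: emeasure_lborel_box_eq)
    finally show "emeasure (distr lborel borel f) (box l u) = (\<Prod>b\<in>Basis. (u - l) \<bullet> b)" .
  qed simp
qed

lemma lin_meas: "linear (f :: 'p::euclidean_space \<Rightarrow> 'q::euclidean_space) \<Longrightarrow> f \<in> borel_measurable borel"
  by (intro borel_measurable_continuous_onI linear_continuous_on linear_conv_bounded_linear[THEN iffD1])

lemma lin_meas2: "linear (f :: 'p::euclidean_space \<Rightarrow> 'q::euclidean_space) \<Longrightarrow> f \<in> lborel \<rightarrow>\<^sub>M borel"
  using lin_meas[of f] by simp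

lemma prod_Basis_cart: "(\<Prod>b\<in>(Basis::(real^'a) set). f b) = (\<Prod>i\<in>UNIV. f (axis i 1))"
proof -
  have B: "(Basis :: (real^'a) set) = (\<lambda>i. axis i 1) ` UNIV" by (auto simp: Basis_vec_def)
  have inj: "inj (\<lambda>i::'a. axis i (1::real))" by (auto simp: inj_on_def axis_eq_axis)
  show ?thesis by (simp add: B prod.reindex[OF inj])
qed

lemma relabel:
  fixes h :: "'b::finite \<Rightarrow> 'a::finite"
  assumes bh: "bij h"
  shows "distr lborel borel (\<lambda>x::real^'a. (\<chi> j. x $ h j) :: real^'b) = lborel"
proof (rule lborel_eqI[symmetric])
  define R where "R = (\<lambda>x::real^'a. (\<chi> j. x $ h j) :: real^'b)"
  have lin: "linear R" by (auto simp: R_def linear_iff vec_eq_iff)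
  fix l u :: "real^'b"
  assume le: "\<And>b. b \<in> Basis \<Longrightarrow> l \<bullet> b \<le> u \<bullet> b"
  have le2: "l $ j \<le> u $ j" for j using le[of "axis j 1"] by (simp add: inner_axis)
  define l' where "l' = (\<chi> i. l $ inv h i)"
  define u' where "u' = (\<chi> i. u $ inv h i)"
  have hi: "h (inv h i) = i" for i using bh by (simp add: bij_is_surj surj_f_inv_f)
  have ih: "inv h (h j) = j" for j using bh by (simp add: bij_is_inj)
  have pre: "R -` box l u = box l' u'"
  proof (rule set_eqI)
    fix x
    have "x \<in> R -` box l u \<longleftrightarrow> (\<forall>j. l$j < x$(h j) \<and> x$(h j) < u$j)"
      by (simp add: R_def mem_box_cart)
    also have "\<dots> \<longleftrightarrow> (\<forall>i. l$(inv h i) < x$i \<and> x$i < u$(inv h i))"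
    proof
      assume A: "\<forall>j. l$j < x$(h j) \<and> x$(h j) < u$j"
      show "\<forall>i. l$(inv h i) < x$i \<and> x$i < u$(inv h i)"
      proof
        fix i show "l$(inv h i) < x$i \<and> x$i < u$(inv h i)" using A[rule_format, of "inv h i"] hi[of i] by simp
      qed
    next
      assume A: "\<forall>i. l$(inv h i) < x$i \<and> x$i < u$(inv h i)"
      show "\<forall>j. l$j < x$(h j) \<and> x$(h j) < u$j"
      proof
        fix j show "l$j < x$(h j) \<and> x$(h j) < u$j" using A[rule_format, of "h j"] ih[of j] by simp
      qed
    qed
    also have "\<dots> \<longleftrightarrow> x \<in> box l' u'" by (simp add: l'_def u'_def mem_box_cart)
    finally show "x \<in> R -` box l u \<longleftrightarrow> x \<in> box l' u'" .
  qed
  have "emeasure (distr lborel borel R) (box l u) = emeasure lborel (R -` box l u)"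
    using emeasure_distr[OF lin_meas2[OF lin], of "box l u"] by simp
  also have "\<dots> = (\<Prod>b\<in>Basis. (u' - l') \<bullet> b)"
  proof -
    have le': "\<And>b. b \<in> Basis \<Longrightarrow> l' \<bullet> b \<le> u' \<bullet> b"
      by (auto simp: Basis_vec_def inner_axis l'_def u'_def le2)
    show ?thesis using emeasure_lborel_box[OF le'] pre by simp
  qed
  also have "\<dots> = (\<Prod>i\<in>UNIV. (u $ inv h i - l $ inv h i))"
    by (simp only: prod_Basis_cart) (simp add: inner_axis l'_def u'_def)
  also have "\<dots> = (\<Prod>j\<in>UNIV. (u $ j - l $ j))"
    using prod.reindex_bij_betw[of "inv h" UNIV UNIV "\<lambda>j. u $ j - l $ j"] bh
    by (metis bij_betw_def bij_imp_bij_inv)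
  also have "\<dots> = (\<Prod>b\<in>Basis. (u - l) \<bullet> b)"
    by (simp only: prod_Basis_cart) (simp add: inner_axis)
  finally show "emeasure (distr lborel borel (\<lambda>x::real^'a. (\<chi> j. x $ h j) :: real^'b)) (box l u) = (\<Prod>b\<in>Basis. (u - l) \<bullet> b)"
    unfolding R_def .
qed simp

lemma orth_inv:
  fixes f :: "real^'n \<Rightarrow> real^'n"
  assumes f: "orthogonal_transformation f"
  shows "distr lborel borel f = lborel"
proof -
  define P :: "real^'n \<Rightarrow> real^('n wo)" where "P x = (\<chi> j. x $ Rep_wo j)" for x
  define Q :: "real^('n wo) \<Rightarrow> real^'n" where "Q y = (\<chi> i. y $ Abs_wo i)" for y
  have QP: "Q (P x) = x" for x by (simp add: P_def Q_def vec_eq_iff Abs_wo_inverse)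
  have PQ: "P (Q y) = y" for y by (simp add: P_def Q_def vec_eq_iff Rep_wo_inverse)
  have linP: "linear P" by (auto simp: P_def linear_iff vec_eq_iff)
  have linQ: "linear Q" by (auto simp: Q_def linear_iff vec_eq_iff)
  have bR: "bij (Rep_wo :: 'n wo \<Rightarrow> 'n)"
    by (metis Rep_wo_inverse Abs_wo_inverse UNIV_I bij_betw_byWitness subset_UNIV)
  have bA: "bij (Abs_wo :: 'n \<Rightarrow> 'n wo)"
    by (metis Rep_wo_inverse Abs_wo_inverse UNIV_I bij_betw_byWitness subset_UNIV)
  have iP: "P a \<bullet> P b = a \<bullet> b" for a b
    unfolding P_def inner_vec_def
    using sum.reindex_bij_betw[of Rep_wo UNIV UNIV "\<lambda>i. a $ i \<bullet> b $ i"] bR by simp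
  have iQ: "Q a \<bullet> Q b = a \<bullet> b" for a b
    unfolding Q_def inner_vec_def
    using sum.reindex_bij_betw[of Abs_wo UNIV UNIV "\<lambda>i. a $ i \<bullet> b $ i"] bA by simp
  define S' where "S' = P \<circ> f \<circ> Q"
  have oS': "orthogonal_transformation S'"
    using f linP linQ iP iQ
    by (auto simp: S'_def orthogonal_transformation_def intro!: linear_compose)
  have fe: "f = Q \<circ> (S' \<circ> P)" by (auto simp: S'_def QP)
  have linS': "linear S'" using oS' orthogonal_transformation_linear by blast
  have dP: "distr lborel borel P = lborel"
    using relabel[OF bR] by (simp add: P_def[abs_def])
  have dQ: "distr lborel borel Q = lborel"
    using relabel[OF bA] by (simp add: Q_def[abs_def])
  have dS: "distr lborel borel S' = lborel" using orth_wo[OF oS'] .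
  have "distr lborel borel f = distr (distr lborel borel (S' \<circ> P)) borel Q"
    unfolding fe by (rule distr_distr[symmetric]) (auto intro: lin_meas linQ measurable_comp lin_meas2 linP linS' linear_compose)
  also have "distr lborel borel (S' \<circ> P) = distr (distr lborel borel P) borel S'"
    by (rule distr_distr[symmetric]) (auto intro: lin_meas lin_meas2 linP linS')
  finally show ?thesis using dP dQ dS by simp
qed




lemma mvn_formula:
  "mvn_id_density \<mu> y = (1/sqrt(2*pi))^CARD('n) * exp (-((y-\<mu>)\<bullet>(y-\<mu>))/2)"
  for \<mu> y :: "real^'n"
proof -
  have "mvn_id_density \<mu> y = (\<Prod>i\<in>UNIV. 1/sqrt(2*pi) * exp (-((y$i - \<mu>$i)^2)/2))"
    by (simp add: mvn_id_density_def normal_density_def power2_commute)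
  also have "\<dots> = (1/sqrt(2*pi))^CARD('n) * exp (\<Sum>i\<in>UNIV. -((y$i - \<mu>$i)^2)/2)"
    by (subst exp_sum, simp, subst prod.distrib, simp only: prod_constant)
  also have "(\<Sum>i\<in>UNIV. -((y$i - \<mu>$i)^2)/2) = -((y-\<mu>)\<bullet>(y-\<mu>))/2"
    by (simp add: inner_vec_def sum_divide_distrib sum_negf power2_eq_square)
  finally show ?thesis .
qed

theorem lemma6:
  fixes M :: "'w measure"
    and Y :: "'w \<Rightarrow> real ^ 'n"
    and \<theta>star d c :: "real ^ 'n"
    and U :: "real ^ 'k ^ 'n"
    and V :: "real ^ 'l ^ 'n"
  assumes "prob_space M"
    and "distributed M lborel Y (sym_mixture_density \<theta>star)"
    and "transpose U ** U = mat 1"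
    and "\<theta>star \<in> range (\<lambda>z. U *v z)"
    and "d \<in> range (\<lambda>z. U *v z)"
    and "transpose V ** U = 0"
  shows "transpose V *v (integral\<^sup>L M (\<lambda>\<omega>. w_d (Y \<omega> - c) d *\<^sub>R Y \<omega>)) = 0"
proof -
  define T where "T = transpose U"
  define Vt where "Vt = transpose V"
  have TU: "T ** U = mat 1" using assms(3) T_def by simp
  have VU: "Vt ** U = 0" using assms(6) Vt_def by simp
  have TUz: "T *v (U *v z) = z" for z by (simp add: matrix_vector_mul_assoc TU)
  have VUz: "Vt *v (U *v z) = 0" for z by (simp add: matrix_vector_mul_assoc VU)
  have inU: "(U *v x) \<bullet> y = x \<bullet> (T *v y)" for x y
    using dot_lmul_matrix[of x T y] by (simp add: T_def)
  obtain zt where zt: "\<theta>star = U *v zt" using assms(4) by auto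
  obtain zd where zd: "d = U *v zd" using assms(5) by auto
  define S where "S y = 2 *\<^sub>R (U *v (T *v y)) - y" for y
  have linM: "linear (\<lambda>x. A *v x)" for A :: "real^'p^'q" by simp
  have lA: "A *v (x + y) = A *v x + A *v y" "A *v (r *\<^sub>R x) = r *\<^sub>R (A *v x)"
    for A :: "real^'p^'q" and x y r using linear_add[OF linM] linear_scale[OF linM] by auto
  have linS: "linear S"
    unfolding linear_iff S_def by (simp add: lA algebra_simps)
  have SU: "S (U *v z) = U *v z" for z
    unfolding S_def TUz by (metis add_diff_cancel scaleR_2)
  have St: "S \<theta>star = \<theta>star" using SU zt by simp
  have Snt: "S (- \<theta>star) = - \<theta>star" using St linear_neg[OF linS] by simp
  have Sinner: "S y \<bullet> S y = y \<bullet> y" for y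
  proof -
    define a where "a = T *v y"
    have e: "S y = 2 *\<^sub>R (U *v a) - y" by (simp add: S_def a_def)
    have i1: "(U *v a) \<bullet> (U *v a) = a \<bullet> a" by (simp add: inU TUz)
    have i2: "(U *v a) \<bullet> y = a \<bullet> a" by (simp add: inU a_def)
    have "S y \<bullet> S y = 4 * ((U *v a) \<bullet> (U *v a)) - 4 * ((U *v a) \<bullet> y) + y \<bullet> y"
      unfolding e by (simp add: inner_diff_left inner_diff_right inner_commute[of y "U *v a"])
    also have "\<dots> = y \<bullet> y" by (simp add: i1 i2)
    finally show ?thesis .
  qed
  have orthS: "orthogonal_transformation S"
    unfolding orthogonal_transformation using linS Sinner by (simp add: norm_eq_sqrt_inner)
  have dS: "(S y) \<bullet> d = y \<bullet> d" for y
  proof -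
    have "(S y) \<bullet> d = d \<bullet> S y" by (simp add: inner_commute)
    also have "\<dots> = 2 * (zd \<bullet> (T *v (U *v (T *v y)))) - zd \<bullet> (T *v y)"
      by (simp add: zd S_def inner_diff_right inU)
    also have "\<dots> = zd \<bullet> (T *v y)" by (simp add: TUz)
    also have "\<dots> = y \<bullet> d" by (metis inU inner_commute zd)
    finally show ?thesis .
  qed
  have VS: "Vt *v S y = - (Vt *v y)" for y
  proof -
    have "Vt *v S y = 2 *\<^sub>R (Vt *v (U *v (T *v y))) - Vt *v y"
      unfolding S_def by (simp only: linear_diff[OF linM] lA)
    then show ?thesis by (simp add: VUz)
  qed
  have SS: "S (S y) = y" for y
  proof -
    have "S (S y) = S (2 *\<^sub>R (U *v (T *v y)) - y)" by (simp only: S_def[of y])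
    also have "\<dots> = 2 *\<^sub>R S (U *v (T *v y)) - S y"
      by (simp only: linear_diff[OF linS] linear_scale[OF linS])
    also have "\<dots> = 2 *\<^sub>R (U *v (T *v y)) - (2 *\<^sub>R (U *v (T *v y)) - y)" by (simp only: SU S_def[of y])
    also have "\<dots> = y" by simp
    finally show ?thesis .
  qed
  have pS: "sym_mixture_density \<theta>star (S y) = sym_mixture_density \<theta>star y" for y
  proof -
    have m: "mvn_id_density \<mu> (S y) = mvn_id_density \<mu> y" if "S \<mu> = \<mu>" for \<mu>
    proof -
      have "S y - \<mu> = S (y - \<mu>)" using linear_diff[OF linS, of y \<mu>] that by simp
      then have "(S y - \<mu>) \<bullet> (S y - \<mu>) = (y - \<mu>) \<bullet> (y - \<mu>)" using Sinner by simp
      then show ?thesis by (simp only: mvn_formula)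
    qed
    show ?thesis unfolding sym_mixture_density_def using m[OF St] m[OF Snt] by simp
  qed
  define D where "D = (\<lambda>x. ennreal (sym_mixture_density \<theta>star x))"
  have dist: "distr M lborel Y = density lborel D" "D \<in> borel_measurable lborel" "Y \<in> M \<rightarrow>\<^sub>M lborel"
    using assms(2) unfolding distributed_def D_def by auto
  have DS: "D (S x) = D x" for x by (simp add: D_def pS)
  have SMb: "S \<in> borel \<rightarrow>\<^sub>M borel" by (rule lin_meas[OF linS])
  then have SM: "S \<in> lborel \<rightarrow>\<^sub>M lborel" by simp
  have dlS: "distr lborel lborel S = lborel"
  proof -
    have "distr lborel lborel S = distr lborel borel S" by (rule distr_cong) auto
    then show ?thesis using orth_inv[OF orthS] by simp
  qed
  define N where "N = density lborel D"
  have NS: "distr N lborel S = N"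
  proof -
    have eq: "(\<lambda>x. D (S x)) = D" using DS by auto
    have "N = density (distr lborel lborel S) D" by (simp only: dlS N_def)
    also have "\<dots> = distr (density lborel (\<lambda>x. D (S x))) lborel S"
      by (rule density_distr[OF dist(2) SM])
    also have "\<dots> = distr N lborel S" by (simp only: eq N_def)
    finally show ?thesis by (rule sym)
  qed
  define g where "g y = w_d (y - c) d *\<^sub>R y" for y
  have wS: "w_d (S y - c) d = w_d (y - c) d" for y
    by (simp add: w_d_def inner_diff_left dS)
  have gS: "g (S y) = S (g y)" for y
    by (simp add: g_def wS linear_scale[OF linS])
  have gc: "continuous_on UNIV g"
    unfolding g_def w_d_def
    by (intro continuous_intros) (smt (verit) exp_gt_zero)
  have gm: "g \<in> borel_measurable lborel"
    using borel_measurable_continuous_onI[OF gc] by simp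
  have SN: "S \<in> N \<rightarrow>\<^sub>M lborel" using SM unfolding N_def by simp
  have E1: "integral\<^sup>L M (\<lambda>\<omega>. g (Y \<omega>)) = integral\<^sup>L N g"
    using integral_distr[OF dist(3) gm] dist(1) N_def by simp
  have gSm: "(\<lambda>x. g (S x)) \<in> borel_measurable lborel"
    using measurable_compose[OF SM gm] .
  have E2: "integral\<^sup>L M (\<lambda>\<omega>. S (g (Y \<omega>))) = integral\<^sup>L N g"
  proof -
    have "integral\<^sup>L M (\<lambda>\<omega>. S (g (Y \<omega>))) = integral\<^sup>L M (\<lambda>\<omega>. g (S (Y \<omega>)))"
      by (simp add: gS)
    also have "\<dots> = integral\<^sup>L N (\<lambda>x. g (S x))"
      using integral_distr[OF dist(3) gSm] dist(1) N_def by simp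
    also have "\<dots> = integral\<^sup>L (distr N lborel S) g"
      using integral_distr[OF SN gm] by simp
    also have "\<dots> = integral\<^sup>L N g" using NS by simp
    finally show ?thesis .
  qed
  have blS: "bounded_linear S" using linS linear_conv_bounded_linear by blast
  have goalE: "Vt *v integral\<^sup>L M (\<lambda>\<omega>. g (Y \<omega>)) = 0"
  proof (cases "integrable M (\<lambda>\<omega>. g (Y \<omega>))")
    case True
    define E where "E = integral\<^sup>L M (\<lambda>\<omega>. g (Y \<omega>))"
    have "integral\<^sup>L M (\<lambda>\<omega>. S (g (Y \<omega>))) = S E"
      unfolding E_def by (rule integral_bounded_linear[OF blS True])
    then have EE: "S E = E" using E1 E2 E_def by simp
    have h: "Vt *v E = - (Vt *v E)" using VS[of E] EE by simp
    have "(Vt *v E) $ i = 0" for i using arg_cong[OF h, of "\<lambda>v. v $ i"] by simp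
    then show ?thesis unfolding E_def[symmetric] by (simp add: vec_eq_iff)
  next
    case False
    then show ?thesis by (simp add: not_integrable_integral_eq)
  qed
  then show ?thesis by (simp add: Vt_def g_def)
qed

end
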